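(* Let $T$ be the rational map of the plane $$T(x,y)=\bigg(\frac{(1+y)(1+x-xy)^2}{(1+x)(-1-y+xy)(1+x-y^2)},\ \frac{(x-y)^2(1+x+y)}{(1+y-x^2)(1+x-y^2)}\bigg),$$ let $I(x,y)=\dfrac{(x+1)(y+1)(x+y+1)}{xy}$ and $\omega=\dfrac{1}{xy}\,dx\wedge dy$. Then, as identities of rational functions/forms (valid wherever everything is defined): (i) $I\circ T^2=I$; hence $T^2$ maps each level curve $E_r=\{I=r\}$ into itself, and these level curves form a pencil of cubic curves $(x+1)(y+1)(x+y+1)-rxy=0$; (ii) $(T^2)^*\omega=-4\,\omega$, i.e. if $J$ is the Jacobian determinant of $T^2$ at $(x,y)$ and $(\bar x,\bar y)=T^2(x,y)$, then $J(x,y)/(\bar x\bar y)=-4/(xy)$.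
   Context: Geometric meaning: every projective equivalence class of (generic) pentagons in $\mathbb{RP}^2$ has a unique representative with vertices $V_1=[0:-1:1], V_2=[1:0:0], V_3=[0:1:0], V_4=[-1:0:1], V_5=[x:y:1]$; call it $P(x,y)$, so $(x,y)$ are coordinates on the moduli space $M_5$ of projective classes of pentagons. For a polygon with vertices $V_j$ (indices mod 5), the projective normal of the edge $V_jV_{j+1}$ is the line through the point $(V_{j-1}V_{j+1})\cap(V_jV_{j+2})$ (intersection of the diagonals) and the point $(V_{j-1}V_j)\cap(V_{j+1}V_{j+2})$. The map $T$ sends the polygon to the polygon whose vertices are the intersections of consecutive projective normals; in the coordinates $(x,y)$ (after renormalizing to the form $P(\bar x,\bar y)$) it is given by the displayed formula. *)

theory Defs
  imports "HOL-Analysis.Analysis"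
begin

text \<open>The map T on the plane, in the coordinates (x,y) on the moduli space of pentagons.\<close>
definition T_map :: "real \<times> real \<Rightarrow> real \<times> real" where
  "T_map p = (let x = fst p; y = snd p in
     ((1 + y) * (1 + x - x*y)^2 / ((1 + x) * (-1 - y + x*y) * (1 + x - y^2)),
      (x - y)^2 * (1 + x + y) / ((1 + y - x^2) * (1 + x - y^2))))"

definition T_defined :: "real \<times> real \<Rightarrow> bool" where
  "T_defined p = (let x = fst p; y = snd p in
     1 + x \<noteq> 0 \<and> -1 - y + x*y \<noteq> 0 \<and> 1 + x - y^2 \<noteq> 0 \<and> 1 + y - x^2 \<noteq> 0)"

definition I_inv :: "real \<times> real \<Rightarrow> real" where
  "I_inv p = (let x = fst p; y = snd p in (x + 1) * (y + 1) * (x + y + 1) / (x * y))"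

definition det2 :: "(real \<times> real \<Rightarrow> real \<times> real) \<Rightarrow> real" where
  "det2 D = fst (D (1,0)) * snd (D (0,1)) - snd (D (1,0)) * fst (D (0,1))"

end

theory Submission
  imports Defs
begin

definition "un x y = (1+y)*(1+x-x*y)^2" for x y :: real
definition "ud x y = (1+x)*(-1-y+x*y)*(1+x-y^2)" for x y :: real
definition "vn x y = (x-y)^2*(1+x+y)" for x y :: real
definition "vd x y = (1+y-x^2)*(1+x-y^2)" for x y :: real
definition "unx x y = (1+y)*2*(1+x-x*y)*(1-y)" for x y :: real
definition "uny x y = (1+x-x*y)^2 + (1+y)*2*(1+x-x*y)*(-x)" for x y :: real
definition "udx x y = (-1-y+x*y)*(1+x-y^2) + (1+x)*y*(1+x-y^2) + (1+x)*(-1-y+x*y)" for x y :: real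
definition "udy x y = (1+x)*(x-1)*(1+x-y^2) + (1+x)*(-1-y+x*y)*(-2*y)" for x y :: real
definition "vnx x y = 2*(x-y)*(1+x+y) + (x-y)^2" for x y :: real
definition "vny x y = -2*(x-y)*(1+x+y)+(x-y)^2" for x y :: real
definition "vdx x y = -2*x*(1+x-y^2) + (1+y-x^2)" for x y :: real
definition "vdy x y = (1+x-y^2) + (1+y-x^2)*(-2*y)" for x y :: real

definition "DT x y = (\<lambda>q::real\<times>real.
   (((unx x y * ud x y - un x y * udx x y)/(ud x y)^2) * fst q + ((uny x y * ud x y - un x y * udy x y)/(ud x y)^2) * snd q,
    ((vnx x y * vd x y - vn x y * vdx x y)/(vd x y)^2) * fst q + ((vny x y * vd x y - vn x y * vdy x y)/(vd x y)^2) * snd q))"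

definition "Kf x y = (1+x)*(1+y)*(1+x+y)" for x y :: real

definition "Jf x y = (-2*(x-y)^2*(1+x-x*y)^2*(1+y-x*y)*(1+x-y^2)^2*(1+y-x^2)) / ((ud x y)^2 * (vd x y)^2)" for x y :: real

lemma T_eq: "T_map = (\<lambda>p. (un (fst p) (snd p) / ud (fst p) (snd p), vn (fst p) (snd p) / vd (fst p) (snd p)))"
  by (rule ext) (simp add: T_map_def Let_def un_def ud_def vn_def vd_def)

lemma Tdef: assumes "T_defined (x,y)" shows "ud x y \<noteq> 0" "vd x y \<noteq> 0" "1+x \<noteq> 0"
  using assms by (auto simp: T_defined_def ud_def vd_def)

lemma P1: fixes x y :: real shows
 "(unx x y*ud x y-un x y*udx x y)*(vny x y* vd x y-vn x y* vdy x y) - (uny x y*ud x y-un x y*udy x y)*(vnx x y* vd x y-vn x y* vdx x y)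
   = -2*(x-y)^2*(1+x-x*y)^2*(1+y-x*y)*(1+x-y^2)^2*(1+y-x^2)"
  unfolding un_def ud_def vn_def vd_def unx_def uny_def udx_def udy_def vnx_def vny_def vdx_def vdy_def
  by algebra

lemma frac4: "(a/p) * (d/q) - (c/q) * (b/p) = (a*d - b*c) / (p*q)" for a b c d p q :: real
  by (simp add: diff_divide_distrib mult.commute mult.left_commute)

lemma det_DT: "det2 (DT x y) = Jf x y"
proof -
  have "det2 (DT x y) = ((unx x y*ud x y-un x y*udx x y)*(vny x y * vd x y-vn x y * vdy x y) - (uny x y*ud x y-un x y*udy x y)*(vnx x y * vd x y-vn x y * vdx x y)) / ((ud x y)^2 * (vd x y)^2)"
    unfolding det2_def DT_def by (simp only: fst_conv snd_conv mult_1_right mult_zero_right add_0_right add_0_left frac4)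
  then show ?thesis by (simp only: P1 Jf_def)
qed

lemma d_un: "((\<lambda>p. un (fst p) (snd p)) has_derivative (\<lambda>h. unx x y * fst h + uny x y * snd h)) (at (x,y))"
  unfolding un_def
  apply (rule has_derivative_eq_rhs)
   apply (rule derivative_eq_intros refl | simp)+
  apply (simp add: fun_eq_iff unx_def uny_def power2_eq_square algebra_simps)
  done

lemma d_ud: "((\<lambda>p. ud (fst p) (snd p)) has_derivative (\<lambda>h. udx x y * fst h + udy x y * snd h)) (at (x,y))"
  unfolding ud_def
  apply (rule has_derivative_eq_rhs)
   apply (rule derivative_eq_intros refl | simp)+
  apply (simp add: fun_eq_iff udx_def udy_def power2_eq_square algebra_simps)
  done

lemma d_vn: "((\<lambda>p. vn (fst p) (snd p)) has_derivative (\<lambda>h. vnx x y * fst h + vny x y * snd h)) (at (x,y))"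
  unfolding vn_def
  apply (rule has_derivative_eq_rhs)
   apply (rule derivative_eq_intros refl | simp)+
  apply (simp add: fun_eq_iff vnx_def vny_def power2_eq_square algebra_simps)
  done

lemma d_vd: "((\<lambda>p. vd (fst p) (snd p)) has_derivative (\<lambda>h. vdx x y * fst h + vdy x y * snd h)) (at (x,y))"
  unfolding vd_def
  apply (rule has_derivative_eq_rhs)
   apply (rule derivative_eq_intros refl | simp)+
  apply (simp add: fun_eq_iff vdx_def vdy_def power2_eq_square algebra_simps)
  done

lemma T_deriv: assumes "T_defined (x,y)" shows "(T_map has_derivative DT x y) (at (x,y))"
  using Tdef[OF assms] unfolding T_eq
  apply -
  apply (rule has_derivative_eq_rhs)
   apply (rule has_derivative_Pair)
    apply (rule has_derivative_divide[OF d_un d_ud], simp)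
   apply (rule has_derivative_divide[OF d_vn d_vd], simp)
  apply (simp add: fun_eq_iff DT_def field_simps power2_eq_square)
  done

definition "Jn x y = -2*(x-y)^2*(1+x-x*y)^2*(1+y-x*y)*(1+x-y^2)^2*(1+y-x^2)" for x y :: real

lemma Kf_T: assumes "T_defined (x,y)"
  shows "Kf (un x y / ud x y) (vn x y / vd x y) = (ud x y+un x y)*(vd x y+vn x y)*(ud x y* vd x y+un x y* vd x y+vn x y*ud x y)/((ud x y)^2*(vd x y)^2)"
  using Tdef[OF assms] unfolding Kf_def by (simp add: field_simps power2_eq_square)

lemma PE1: "(ud x y+un x y)*(vd x y+vn x y)*(ud x y* vd x y+un x y* vd x y+vn x y*ud x y) * Kf x y = - x * y * un x y * vn x y * ud x y * vd x y"
  unfolding Kf_def un_def ud_def vn_def vd_def by algebra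

lemma PE2: "Jn x y * Kf x y = 2 * un x y * vn x y * ud x y * vd x y"
  unfolding Jn_def Kf_def un_def ud_def vn_def vd_def by algebra

lemma PE3: "Jn x y * (x * y) = -2 * ((ud x y+un x y)*(vd x y+vn x y)*(ud x y* vd x y+un x y* vd x y+vn x y*ud x y))"
  unfolding Jn_def Kf_def un_def ud_def vn_def vd_def by algebra

lemma Jf_alt: "Jf x y = Jn x y / ((ud x y)^2 * (vd x y)^2)"
  unfolding Jf_def Jn_def by simp

lemma E1: assumes "T_defined (x,y)"
  shows "Kf (un x y / ud x y) (vn x y / vd x y) * Kf x y = - x * y * (un x y / ud x y) * (vn x y / vd x y)"
proof -
  note nz = Tdef[OF assms]
  have "Kf (un x y / ud x y) (vn x y / vd x y) * Kf x y = ((ud x y+un x y)*(vd x y+vn x y)*(ud x y* vd x y+un x y* vd x y+vn x y*ud x y) * Kf x y)/((ud x y)^2*(vd x y)^2)"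
    by (simp add: Kf_T[OF assms])
  also have "\<dots> = (- x * y * un x y * vn x y * ud x y * vd x y)/((ud x y)^2*(vd x y)^2)"
    by (simp only: PE1)
  also have "\<dots> = - x * y * (un x y / ud x y) * (vn x y / vd x y)"
    using nz by (simp add: field_simps power2_eq_square)
  finally show ?thesis .
qed

lemma E2: assumes "T_defined (x,y)"
  shows "Jf x y * Kf x y = 2 * (un x y / ud x y) * (vn x y / vd x y)"
proof -
  note nz = Tdef[OF assms]
  have "Jf x y * Kf x y = (Jn x y * Kf x y) / ((ud x y)^2 * (vd x y)^2)"
    by (simp add: Jf_alt)
  also have "\<dots> = (2 * un x y * vn x y * ud x y * vd x y)/((ud x y)^2*(vd x y)^2)"
    by (simp only: PE2)
  also have "\<dots> = 2 * (un x y / ud x y) * (vn x y / vd x y)"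
    using nz by (simp add: field_simps power2_eq_square)
  finally show ?thesis .
qed

lemma E3: assumes "T_defined (x,y)"
  shows "Jf x y * (x * y) = -2 * Kf (un x y / ud x y) (vn x y / vd x y)"
proof -
  have "Jf x y * (x * y) = (Jn x y * (x * y)) / ((ud x y)^2 * (vd x y)^2)"
    by (simp add: Jf_alt)
  also have "\<dots> = -2 * ((ud x y+un x y)*(vd x y+vn x y)*(ud x y* vd x y+un x y* vd x y+vn x y*ud x y)) / ((ud x y)^2 * (vd x y)^2)"
    by (simp only: PE3)
  also have "\<dots> = -2 * Kf (un x y / ud x y) (vn x y / vd x y)"
    by (simp add: Kf_T[OF assms])
  finally show ?thesis .
qed

lemma det2_comp: "det2 (DT u v \<circ> DT x y) = det2 (DT u v) * det2 (DT x y)"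
proof -
  have g: "\<And>a b c d a' b' c' d'. det2 ((\<lambda>q::real\<times>real. (a*fst q + b* snd q, c*fst q + d* snd q)) \<circ> (\<lambda>q. (a'*fst q + b'* snd q, c'*fst q + d'* snd q)))
     = det2 (\<lambda>q::real\<times>real. (a*fst q + b* snd q, c*fst q + d* snd q)) * det2 (\<lambda>q::real\<times>real. (a'*fst q + b'* snd q, c'*fst q + d'* snd q))"
    by (simp add: det2_def algebra_simps)
  show ?thesis unfolding DT_def by (rule g)
qed

theorem theorem1:
  fixes x y :: real
  assumes "T_defined (x, y)" and "T_defined (T_map (x, y))"
    and "x * y \<noteq> 0"
    and "fst (T_map (T_map (x, y))) * snd (T_map (T_map (x, y))) \<noteq> 0"
  shows "I_inv (T_map (T_map (x, y))) = I_inv (x, y)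
     \<and> (\<exists>D. ((T_map \<circ> T_map) has_derivative D) (at (x, y))
          \<and> det2 D / (fst (T_map (T_map (x, y))) * snd (T_map (T_map (x, y)))) = -4 / (x * y))"
proof -
  define u where "u = un x y / ud x y"
  define v where "v = vn x y / vd x y"
  define a where "a = un u v / ud u v"
  define b where "b = vn u v / vd u v"
  have Tp: "T_map (x,y) = (u,v)" by (simp add: T_eq u_def v_def)
  have Tq: "T_map (u,v) = (a,b)" by (simp add: T_eq a_def b_def)
  have dq: "T_defined (u,v)" using assms(2) Tp by simp
  have ab: "a * b \<noteq> 0" using assms(4) Tp Tq by simp
  have xy: "x * y \<noteq> 0" by fact
  have e1: "Jf x y * Kf x y = 2 * u * v" using E2[OF assms(1)] u_def v_def by simp
  have e2: "Jf x y * (x * y) = -2 * Kf u v" using E3[OF assms(1)] u_def v_def by simp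
  have e3: "Jf u v * Kf u v = 2 * a * b" using E2[OF dq] a_def b_def by simp
  have e4: "Jf u v * (u * v) = -2 * Kf a b" using E3[OF dq] a_def b_def by simp
  have key: "Kf a b * (x * y) = Kf x y * (a * b)"
    using e1 e2 e3 e4 by algebra
  have I1: "I_inv (a,b) = Kf a b / (a * b)" by (simp add: I_inv_def Kf_def algebra_simps)
  have I2: "I_inv (x,y) = Kf x y / (x * y)" by (simp add: I_inv_def Kf_def algebra_simps)
  have part1: "I_inv (a,b) = I_inv (x,y)"
    unfolding I1 I2 using key ab xy by (simp add: field_simps)
  have der: "((T_map \<circ> T_map) has_derivative (DT u v \<circ> DT x y)) (at (x, y))"
    using diff_chain_at[OF T_deriv[OF assms(1)], of T_map "DT u v"] T_deriv[OF dq] Tp by simp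
  have jj: "Jf u v * Jf x y * (x * y) = -4 * (a * b)"
    using e2 e3 by algebra
  have part2: "det2 (DT u v \<circ> DT x y) / (a * b) = -4 / (x * y)"
    unfolding det2_comp det_DT using jj ab xy by (simp add: field_simps)
  show ?thesis using part1 part2 der Tp Tq by auto
qed

end
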